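(* Let $\mathcal{H}=(X,Y,E)$ be a bipartite graph with $Y=\{y_1,\dots,y_\ell\}$, let $R$ be a relation on attributes $X$, and let $\mathcal{E}_{\mathcal{H}}(R)=\{L(v) : v \text{ a node of } T_{\mathcal{H}}(R),\ L(v)\neq\bot^*\}$. Then $\mathcal{E}_{\mathcal{H}}(R)$ is $\mathcal{H}$-equivalent to $R$ and $|\mathcal{E}_{\mathcal{H}}(R)|\le e\cdot\phi(\mathcal{H})$, where $\phi(\mathcal{H})=\ell!\prod_{j\in[\ell]} d_{\mathcal{H}}(y_j)$.
   Context: $d_{\mathcal{H}}(v)$ is the degree of $v$ in $\mathcal{H}$; $t[z]$ is the value of tuple $t$ at attribute $z$; $e$ is Euler's number. A tuple $t$ over $Y$ is $\mathcal{H}$-accepted by a relation $R$ on $X$ if some $t_R\in R$ satisfies $t_R[x_i]\neq t[y_j]$ for all $(x_i,y_j)\in E$; relations $R_1,R_2$ on $X$ are $\mathcal{H}$-equivalent if they $\mathcal{H}$-accept exactly the same tuples over $Y$. Construction of $T_{\mathcal{H}}(R)$: a rooted tree whose nodes have labels $L(v)$ that are either tuples of $R$ or the symbol $\bot^*$, and whose edges have labels $(y_j,a)$. Initially it is a single root labeled $\bot^*$. The tuples of $R$ are scanned one by one in an arbitrary order; when $t$ is scanned, every leaf $v$ with $L(v)=\bot^*$, whose root-to-$v$ path has edge labels $(y_{j_1},a_{j_1}),\dots,(y_{j_p},a_{j_p})$, is processed: if there exist $j\in\{j_1,\dots,j_p\}$ and $(x_i,y_j)\in E$ with $t[x_i]=a_j$,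 nothing is done; otherwise set $L(v)=t$, and if $p<\ell$, for every edge $(x_i,y_j)\in E$ with $j\notin\{j_1,\dots,j_p\}$ add a new child of $v$ labeled $\bot^*$ via an edge labeled $(y_j,t[x_i])$. The construction stops when all tuples are scanned or no leaf has label $\bot^*$. *)

theory Defs
  imports Complex_Main
begin

(* Bipartite graph H = (X, Y, E) with E \<subseteq> X \<times> Y.
   Tuples over X: functions 'x \<Rightarrow> 'v; tuples over Y: functions 'y \<Rightarrow> 'v. *)

definition H_accepts :: "('x \<times> 'y) set \<Rightarrow> ('x \<Rightarrow> 'v) set \<Rightarrow> ('y \<Rightarrow> 'v) \<Rightarrow> bool" where
  "H_accepts E R t \<longleftrightarrow> (\<exists>tR\<in>R. \<forall>(x, y)\<in>E. tR x \<noteq> t y)"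

definition H_equivalent :: "('x \<times> 'y) set \<Rightarrow> ('x \<Rightarrow> 'v) set \<Rightarrow> ('x \<Rightarrow> 'v) set \<Rightarrow> bool" where
  "H_equivalent E R1 R2 \<longleftrightarrow> (\<forall>t. H_accepts E R1 t = H_accepts E R2 t)"

definition degree :: "'x set \<Rightarrow> ('x \<times> 'y) set \<Rightarrow> 'y \<Rightarrow> nat" where
  "degree X E y = card {x\<in>X. (x, y) \<in> E}"

definition phi :: "'x set \<Rightarrow> 'y set \<Rightarrow> ('x \<times> 'y) set \<Rightarrow> nat" where
  "phi X Y E = fact (card Y) * (\<Prod>y\<in>Y. degree X E y)"

(* A node is identified by the list of graph edges (x_i, y_j)
   that created the edges on its root-to-node path; the edge label of the k-th
   edge (x_i,y_j) is (y_j, L(parent)[x_i]).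
   A tree maps a node to: None (node absent), Some None (label bottom-star),
   Some (Some t) (label = the tuple t). *)
type_synonym ('x, 'y, 'v) tree = "('x \<times> 'y) list \<Rightarrow> ('x \<Rightarrow> 'v) option option"

definition init_tree :: "('x, 'y, 'v) tree" where
  "init_tree = (\<lambda>p. if p = [] then Some None else None)"

definition edge_val :: "('x, 'y, 'v) tree \<Rightarrow> ('x \<times> 'y) list \<Rightarrow> nat \<Rightarrow> 'v" where
  "edge_val T p k = (case T (take k p) of Some (Some s) \<Rightarrow> s (fst (p ! k)) | _ \<Rightarrow> undefined)"

definition blocked :: "('x \<times> 'y) set \<Rightarrow> ('x, 'y, 'v) tree \<Rightarrow> ('x \<times> 'y) list \<Rightarrow> ('x \<Rightarrow> 'v) \<Rightarrow> bool" where
  "blocked E T p t \<longleftrightarrow> (\<exists>k<length p. \<exists>x. (x, snd (p ! k)) \<in> E \<and> t x = edge_val T p k)"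

(* processing all bottom-star-leaves when tuple t is scanned; l = |Y| *)
definition scan_step :: "('x \<times> 'y) set \<Rightarrow> nat \<Rightarrow> ('x \<Rightarrow> 'v) \<Rightarrow> ('x, 'y, 'v) tree \<Rightarrow> ('x, 'y, 'v) tree" where
  "scan_step E l t T = (\<lambda>q.
     if T q = Some None \<and> \<not> blocked E T q t then Some (Some t)
     else if q \<noteq> [] \<and> T (butlast q) = Some None \<and> \<not> blocked E T (butlast q) t
             \<and> length (butlast q) < l \<and> last q \<in> E \<and> snd (last q) \<notin> snd ` set (butlast q)
          then Some None
     else T q)"

(* T_H(R) for the scanning order ts (once no bottom-star leaf remains, steps do nothing) *)
definition build_tree :: "('x \<times> 'y) set \<Rightarrow> nat \<Rightarrow> ('x \<Rightarrow> 'v) list \<Rightarrow> ('x, 'y, 'v) tree" where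
  "build_tree E l ts = fold (scan_step E l) ts init_tree"

definition extracted :: "('x \<times> 'y) set \<Rightarrow> nat \<Rightarrow> ('x \<Rightarrow> 'v) list \<Rightarrow> ('x \<Rightarrow> 'v) set" where
  "extracted E l ts = {s. \<exists>p. build_tree E l ts p = Some (Some s)}"

end

theory Submission
  imports Defs
begin

definition G :: "nat \<Rightarrow> real" where "G n = fact n * (\<Sum>k\<le>n. 1 / fact k)"

lemma G_0: "G 0 = 1" by (simp add: G_def)
lemma G_Suc: "G (Suc n) = 1 + real (Suc n) * G n"
proof -
  have "(fact n::real) + fact n * real n \<noteq> 0"
    by (metis add_pos_nonneg fact_gt_zero less_irrefl mult_nonneg_nonneg of_nat_0_le_iff fact_ge_zero)
  then show ?thesis by (simp add: G_def algebra_simps)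
qed

lemma G_le: "G n \<le> exp 1 * fact n"
proof -
  have s: "(\<lambda>n. 1 / fact n :: real) sums exp 1"
    using exp_converges[of "1::real"] by (simp add: divide_inverse)
  have "(\<Sum>k\<le>n. 1 / fact k :: real) \<le> exp 1"
    using sum_le_suminf[OF sums_summable[OF s], of "{..n}"] sums_unique[OF s] by simp
  then show ?thesis unfolding G_def by (simp add: mult.commute)
qed

definition paths :: "('x \<times> 'y) set \<Rightarrow> 'y set \<Rightarrow> ('x \<times> 'y) list set" where
  "paths E S = {p. set p \<subseteq> E \<and> distinct (map snd p) \<and> snd ` set p \<subseteq> S}"

lemma paths_finite:
  assumes "finite E" "finite S" shows "finite (paths E S)"
proof -
  have "paths E S \<subseteq> {xs. set xs \<subseteq> E \<and> length xs \<le> card S}"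
  proof
    fix p assume "p \<in> paths E S"
    then have p: "set p \<subseteq> E" "distinct (map snd p)" "snd ` set p \<subseteq> S" by (auto simp: paths_def)
    have "length p = card (set (map snd p))" using p(2) distinct_card by fastforce
    also have "\<dots> \<le> card S" using p(3) assms(2) by (simp add: card_mono)
    finally show "p \<in> {xs. set xs \<subseteq> E \<and> length xs \<le> card S}" using p by simp
  qed
  then show ?thesis using finite_lists_length_le[OF assms(1)] finite_subset by blast
qed

lemma paths_empty: "paths E {} = {[]}" by (auto simp: paths_def)

lemma paths_decomp:
  assumes "E \<subseteq> X \<times> UNIV"
  shows "paths E S \<subseteq> insert [] (\<Union>y\<in>S. \<Union>x\<in>{x\<in>X. (x,y)\<in>E}. Cons (x,y) ` paths E (S - {y}))"
proof
  fix p assume p: "p \<in> paths E S"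
  show "p \<in> insert [] (\<Union>y\<in>S. \<Union>x\<in>{x\<in>X. (x,y)\<in>E}. Cons (x,y) ` paths E (S - {y}))"
  proof (cases p)
    case Nil then show ?thesis by simp
  next
    case (Cons a q)
    obtain x y where a: "a = (x,y)" by fastforce
    have h: "set q \<subseteq> E" "distinct (map snd q)" "snd ` set q \<subseteq> S" "y \<notin> snd ` set q" "(x,y) \<in> E" "y \<in> S"
      using p Cons a by (auto simp: paths_def)
    then have "q \<in> paths E (S - {y})" by (auto simp: paths_def)
    moreover have "x \<in> X" using h(5) assms by auto
    ultimately show ?thesis using Cons a h by blast
  qed
qed

lemma paths_card:
  assumes fX: "finite X" and fE: "finite E" and EX: "E \<subseteq> X \<times> UNIV"
    and deg: "\<forall>y\<in>S0. 1 \<le> degree X E y"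
  shows "\<forall>S. finite S \<and> S \<subseteq> S0 \<and> card S = n \<longrightarrow>
     real (card (paths E S)) \<le> G n * (\<Prod>y\<in>S. real (degree X E y))"
proof (induction n)
  case 0
  then show ?case by (auto simp: paths_empty G_0)
next
  case (Suc n)
  show ?case
  proof (intro allI impI)
    fix S assume S: "finite S \<and> S \<subseteq> S0 \<and> card S = Suc n"
    let ?D = "\<lambda>S. (\<Prod>y\<in>S. real (degree X E y))"
    let ?U = "\<Union>y\<in>S. \<Union>x\<in>{x\<in>X. (x,y)\<in>E}. Cons (x,y) ` paths E (S - {y})"
    have fU: "finite ?U" using S fX by (intro finite_UN_I finite_imageI paths_finite fE) auto
    have "card (paths E S) \<le> card (insert [] ?U)"
      using card_mono[OF _ paths_decomp[OF EX]] fU by blast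
    also have "\<dots> \<le> Suc (card ?U)" using fU by (simp add: card_insert_if)
    also have "card ?U \<le> (\<Sum>y\<in>S. card (\<Union>x\<in>{x\<in>X. (x,y)\<in>E}. Cons (x,y) ` paths E (S - {y})))"
      using S by (intro card_UN_le) auto
    also have "\<dots> \<le> (\<Sum>y\<in>S. \<Sum>x\<in>{x\<in>X. (x,y)\<in>E}. card (Cons (x,y) ` paths E (S - {y})))"
      using fX by (intro sum_mono card_UN_le) auto
    also have "\<dots> \<le> (\<Sum>y\<in>S. \<Sum>x\<in>{x\<in>X. (x,y)\<in>E}. card (paths E (S - {y})))"
      by (intro sum_mono card_image_le paths_finite fE) (use S in auto)
    also have "\<dots> = (\<Sum>y\<in>S. degree X E y * card (paths E (S - {y})))"
      by (simp add: degree_def)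
    finally have nb: "card (paths E S) \<le> Suc (\<Sum>y\<in>S. degree X E y * card (paths E (S - {y})))"
      by simp
    have D1: "1 \<le> ?D S" using S deg by (intro prod_ge_1) auto
    have "real (card (paths E S)) \<le> real (Suc (\<Sum>y\<in>S. degree X E y * card (paths E (S - {y}))))"
      using nb by (simp only: of_nat_le_iff)
    also have "\<dots> = 1 + (\<Sum>y\<in>S. real (degree X E y) * real (card (paths E (S - {y}))))"
      by (simp add: of_nat_sum)
    also have "\<dots> \<le> 1 + (\<Sum>y\<in>S. real (degree X E y) * (G n * ?D (S - {y})))"
    proof -
      have "real (card (paths E (S - {y}))) \<le> G n * ?D (S - {y})" if "y \<in> S" for y
      proof -
        have "finite (S - {y}) \<and> S - {y} \<subseteq> S0 \<and> card (S - {y}) = n" using S that by auto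
        then show ?thesis using Suc.IH by blast
      qed
      then show ?thesis by (intro add_left_mono sum_mono mult_left_mono) auto
    qed
    also have "\<dots> = 1 + (\<Sum>y\<in>S. G n * ?D S)"
    proof -
      have eq: "real (degree X E y) * (G n * ?D (S - {y})) = G n * ?D S" if "y \<in> S" for y
        using prod.remove[OF _ that, of "\<lambda>y. real (degree X E y)"] S by simp
      show ?thesis by (rule arg_cong[where f="\<lambda>z. 1 + z"], rule sum.cong[OF refl], rule eq)
    qed
    also have "\<dots> = 1 + real (Suc n) * G n * ?D S" using S by simp
    also have "\<dots> \<le> ?D S + real (Suc n) * G n * ?D S" using D1 by simp
    also have "\<dots> = G (Suc n) * ?D S" by (simp add: G_Suc algebra_simps)
    finally show "real (card (paths E S)) \<le> G (Suc n) * ?D S" .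
  qed
qed

definition tinv :: "('x \<times> 'y) set \<Rightarrow> nat \<Rightarrow> ('x \<Rightarrow> 'v) set \<Rightarrow> ('x,'y,'v) tree \<Rightarrow> bool" where
"tinv E l S T \<longleftrightarrow> T [] \<noteq> None
 \<and> (\<forall>p e. T (p@[e]) \<noteq> None \<longrightarrow> (\<exists>s. T p = Some (Some s)))
 \<and> (\<forall>p. T p \<noteq> None \<longrightarrow> set p \<subseteq> E \<and> distinct (map snd p) \<and> length p \<le> l)
 \<and> (\<forall>p s. T p = Some (Some s) \<longrightarrow> s \<in> S \<and> \<not> blocked E T p s)
 \<and> (\<forall>p s e. T p = Some (Some s) \<and> length p < l \<and> e \<in> E \<and> snd e \<notin> snd ` set p \<longrightarrow> T (p@[e]) \<noteq> None)
 \<and> (\<forall>p s. T p = Some None \<and> s \<in> S \<longrightarrow> blocked E T p s)"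

lemma prefixes_labeled:
  assumes par: "\<forall>p e. T (p@[e]) \<noteq> None \<longrightarrow> (\<exists>s. T p = Some (Some s))"
  shows "T p \<noteq> None \<Longrightarrow> k < length p \<Longrightarrow> \<exists>s. T (take k p) = Some (Some s)"
proof (induction p arbitrary: k rule: rev_induct)
  case Nil then show ?case by simp
next
  case (snoc e q)
  from par snoc.prems(1) obtain s where s: "T q = Some (Some s)" by blast
  show ?case
  proof (cases "k < length q")
    case True
    with snoc.IH s have "\<exists>s. T (take k q) = Some (Some s)" by simp
    with True show ?thesis by simp
  next
    case False
    with snoc.prems(2) have "k = length q" by simp
    with s show ?thesis by simp
  qed
qed

lemma step_old:
  assumes par: "\<forall>p e. T (p@[e]) \<noteq> None \<longrightarrow> (\<exists>s. T p = Some (Some s))" and ex: "T q \<noteq> None"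
  shows "scan_step E l t T q = (if T q = Some None \<and> \<not> blocked E T q t then Some (Some t) else T q)"
proof -
  have "\<not> (q \<noteq> [] \<and> T (butlast q) = Some None)"
  proof
    assume h: "q \<noteq> [] \<and> T (butlast q) = Some None"
    then have "T (butlast q @ [last q]) \<noteq> None" using ex by simp
    then obtain s where "T (butlast q) = Some (Some s)" using par by blast
    with h show False by simp
  qed
  then show ?thesis by (auto simp: scan_step_def)
qed

lemma step_new:
  assumes "T q = None"
  shows "scan_step E l t T q = (if q \<noteq> [] \<and> T (butlast q) = Some None \<and> \<not> blocked E T (butlast q) t
     \<and> length (butlast q) < l \<and> last q \<in> E \<and> snd (last q) \<notin> snd ` set (butlast q) then Some None else None)"
  using assms by (simp add: scan_step_def)

lemma edge_val_keep:
  assumes par: "\<forall>p e. T (p@[e]) \<noteq> None \<longrightarrow> (\<exists>s. T p = Some (Some s))"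
    and "T p \<noteq> None" "k < length p"
  shows "edge_val (scan_step E l t T) p k = edge_val T p k"
proof -
  obtain s where s: "T (take k p) = Some (Some s)" using prefixes_labeled[OF par assms(2,3)] by blast
  then have "scan_step E l t T (take k p) = Some (Some s)" using step_old[OF par] by simp
  with s show ?thesis by (simp add: edge_val_def)
qed

lemma blocked_keep:
  assumes par: "\<forall>p e. T (p@[e]) \<noteq> None \<longrightarrow> (\<exists>s. T p = Some (Some s))"
    and "T p \<noteq> None"
  shows "blocked E (scan_step E l t T) p s = blocked E T p s"
  unfolding blocked_def
proof (intro iffI; elim exE conjE)
  fix k x assume "k < length p" "(x, snd (p ! k)) \<in> E" "s x = edge_val (scan_step E l t T) p k"
  then show "\<exists>k<length p. \<exists>x. (x, snd (p ! k)) \<in> E \<and> s x = edge_val T p k"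
    using edge_val_keep[OF par assms(2)] by metis
next
  fix k x assume "k < length p" "(x, snd (p ! k)) \<in> E" "s x = edge_val T p k"
  then show "\<exists>k<length p. \<exists>x. (x, snd (p ! k)) \<in> E \<and> s x = edge_val (scan_step E l t T) p k"
    using edge_val_keep[OF par assms(2)] by metis
qed

lemma step_inv:
  assumes inv: "tinv E l S T"
  shows "tinv E l (insert t S) (scan_step E l t T)"
proof -
  let ?T = "scan_step E l t T"
  have root: "T [] \<noteq> None" using inv unfolding tinv_def by blast
  have par: "\<forall>p e. T (p@[e]) \<noteq> None \<longrightarrow> (\<exists>s. T p = Some (Some s))" using inv unfolding tinv_def by blast
  have wf: "\<forall>p. T p \<noteq> None \<longrightarrow> set p \<subseteq> E \<and> distinct (map snd p) \<and> length p \<le> l" using inv unfolding tinv_def by blast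
  have lab: "\<forall>p s. T p = Some (Some s) \<longrightarrow> s \<in> S \<and> \<not> blocked E T p s" using inv unfolding tinv_def by blast
  have child: "\<forall>p s e. T p = Some (Some s) \<and> length p < l \<and> e \<in> E \<and> snd e \<notin> snd ` set p \<longrightarrow> T (p@[e]) \<noteq> None" using inv unfolding tinv_def by blast
  have comp: "\<forall>p s. T p = Some None \<and> s \<in> S \<longrightarrow> blocked E T p s" using inv unfolding tinv_def by blast
  note old = step_old[OF par, of _ E l t]
  note new = step_new[of T _ E l t]
  have root': "?T [] \<noteq> None" using old[OF root] root by (auto split: if_splits)
  have par': "\<forall>p e. ?T (p@[e]) \<noteq> None \<longrightarrow> (\<exists>s. ?T p = Some (Some s))"
  proof (intro allI impI)
    fix p e assume h: "?T (p@[e]) \<noteq> None"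
    show "\<exists>s. ?T p = Some (Some s)"
    proof (cases "T (p@[e]) = None")
      case True
      with h new[OF True] have "T p = Some None \<and> \<not> blocked E T p t" by (auto split: if_splits)
      then have "?T p = Some (Some t)" using old by simp
      then show ?thesis by blast
    next
      case False
      then obtain s where "T p = Some (Some s)" using par by blast
      then show ?thesis using old by auto
    qed
  qed
  have wf': "\<forall>p. ?T p \<noteq> None \<longrightarrow> set p \<subseteq> E \<and> distinct (map snd p) \<and> length p \<le> l"
  proof (intro allI impI)
    fix p assume h: "?T p \<noteq> None"
    show "set p \<subseteq> E \<and> distinct (map snd p) \<and> length p \<le> l"
    proof (cases "T p = None")
      case True
      with h new[OF True] have c: "p \<noteq> [] \<and> T (butlast p) = Some None \<and> length (butlast p) < l
          \<and> last p \<in> E \<and> snd (last p) \<notin> snd ` set (butlast p)" by (auto split: if_splits)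
      define b where "b = butlast p"
      define e where "e = last p"
      have p: "p = b @ [e]" using c unfolding b_def e_def by simp
      have "set b \<subseteq> E \<and> distinct (map snd b) \<and> length b \<le> l"
        using wf c b_def by auto
      then show ?thesis using c p unfolding b_def[symmetric] e_def[symmetric] by auto
    next
      case False then show ?thesis using wf by blast
    qed
  qed
  have lab': "\<forall>p s. ?T p = Some (Some s) \<longrightarrow> s \<in> insert t S \<and> \<not> blocked E ?T p s"
  proof (intro allI impI)
    fix p s assume h: "?T p = Some (Some s)"
    have ex: "T p \<noteq> None"
    proof
      assume "T p = None" with h new show False by (auto split: if_splits)
    qed
    show "s \<in> insert t S \<and> \<not> blocked E ?T p s"
    proof (cases "T p = Some None \<and> \<not> blocked E T p t")
      case True
      then have "s = t" using h old[OF ex] by (auto split: if_splits)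
      then show ?thesis using True blocked_keep[OF par ex] by simp
    next
      case False
      then have "T p = Some (Some s)" using h old[OF ex] by (auto split: if_splits)
      then show ?thesis using lab blocked_keep[OF par ex] by simp
    qed
  qed
  have child': "\<forall>p s e. ?T p = Some (Some s) \<and> length p < l \<and> e \<in> E \<and> snd e \<notin> snd ` set p \<longrightarrow> ?T (p@[e]) \<noteq> None"
  proof (intro allI impI)
    fix p s e assume h: "?T p = Some (Some s) \<and> length p < l \<and> e \<in> E \<and> snd e \<notin> snd ` set p"
    have ex: "T p \<noteq> None"
    proof
      assume "T p = None" with h new show False by (auto split: if_splits)
    qed
    show "?T (p@[e]) \<noteq> None"
    proof (cases "T p = Some None \<and> \<not> blocked E T p t")
      case True
      have n: "T (p@[e]) = None"
      proof (rule ccontr)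
        assume "T (p@[e]) \<noteq> None"
        then obtain s' where "T p = Some (Some s')" using par by blast
        with True show False by simp
      qed
      show ?thesis using new[OF n] True h by simp
    next
      case False
      then have "T p = Some (Some s)" using h old[OF ex] by (auto split: if_splits)
      then have "T (p@[e]) \<noteq> None" using child h by blast
      then show ?thesis using old by (auto split: if_splits)
    qed
  qed
  have comp': "\<forall>p s. ?T p = Some None \<and> s \<in> insert t S \<longrightarrow> blocked E ?T p s"
  proof (intro allI impI)
    fix p s assume h: "?T p = Some None \<and> s \<in> insert t S"
    show "blocked E ?T p s"
    proof (cases "T p = None")
      case False
      then have c: "T p = Some None \<and> blocked E T p t" using h old[OF False] by (auto split: if_splits)
      show ?thesis
      proof (cases "s = t")
        case True then show ?thesis using c blocked_keep[OF par False] by simp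
      next
        case False': False
        then have "s \<in> S" using h by simp
        then show ?thesis using c comp blocked_keep[OF par False] by simp
      qed
    next
      case True
      with h new[OF True] have c: "p \<noteq> [] \<and> T (butlast p) = Some None \<and> \<not> blocked E T (butlast p) t
          \<and> last p \<in> E" by (auto split: if_splits)
      define b where "b = butlast p"
      define e where "e = last p"
      have p: "p = b @ [e]" using c unfolding b_def e_def by simp
      have Tb: "T b = Some None" "\<not> blocked E T b t" "e \<in> E" using c b_def e_def by auto
      have Tb': "?T b = Some (Some t)" using old Tb by simp
      have evk: "edge_val ?T p k = edge_val T b k" if "k < length b" for k
      proof -
        have "edge_val ?T p k = edge_val ?T b k" unfolding edge_val_def p nth_append_left[OF that] using that by simp
        also have "\<dots> = edge_val T b k" using edge_val_keep[OF par _ that] Tb by simp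
        finally show ?thesis .
      qed
      show ?thesis
      proof (cases "s = t")
        case True
        have "edge_val ?T p (length b) = t (fst e)" using Tb' p by (simp add: edge_val_def)
        moreover have "(fst e, snd (p ! length b)) \<in> E" using p Tb by simp
        moreover have "length b < length p" using p by simp
        ultimately show ?thesis unfolding blocked_def using True by metis
      next
        case False
        then have "s \<in> S" using h by simp
        then have "blocked E T b s" using comp Tb by blast
        then obtain k x where k: "k < length b" "(x, snd (b ! k)) \<in> E" "s x = edge_val T b k"
          unfolding blocked_def by blast
        have "k < length p" "(x, snd (p ! k)) \<in> E" "s x = edge_val ?T p k"
          using k p evk by (auto simp: nth_append)
        then show ?thesis unfolding blocked_def by blast
      qed
    qed
  qed
  show ?thesis unfolding tinv_def using root' par' wf' lab' child' comp' by blast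
qed

lemma init_inv: "tinv E l {} init_tree"
  by (simp add: tinv_def init_tree_def)

lemma fold_inv: "tinv E l S T \<Longrightarrow> tinv E l (S \<union> set ts) (fold (scan_step E l) ts T)"
proof (induction ts arbitrary: S T)
  case Nil then show ?case by simp
next
  case (Cons t ts)
  have "tinv E l (insert t S) (scan_step E l t T)" using step_inv[OF Cons.prems] .
  from Cons.IH[OF this] show ?case by simp
qed

lemma descent:
  assumes inv: "tinv E l S T" and EY: "E \<subseteq> X \<times> Y" and fin: "finite Y" and l: "l = card Y"
    and tR: "tR \<in> S" and acc: "\<forall>(x,y)\<in>E. tR x \<noteq> t y"
  shows "\<exists>p s. T p = Some (Some s) \<and> (\<forall>(x,y)\<in>E. s x \<noteq> t y)"
proof -
  have root: "T [] \<noteq> None" using inv unfolding tinv_def by blast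
  have wf: "\<forall>p. T p \<noteq> None \<longrightarrow> set p \<subseteq> E \<and> distinct (map snd p) \<and> length p \<le> l" using inv unfolding tinv_def by blast
  have lab: "\<forall>p s. T p = Some (Some s) \<longrightarrow> s \<in> S \<and> \<not> blocked E T p s" using inv unfolding tinv_def by blast
  have child: "\<forall>p s e. T p = Some (Some s) \<and> length p < l \<and> e \<in> E \<and> snd e \<notin> snd ` set p \<longrightarrow> T (p@[e]) \<noteq> None" using inv unfolding tinv_def by blast
  have comp: "\<forall>p s. T p = Some None \<and> s \<in> S \<longrightarrow> blocked E T p s" using inv unfolding tinv_def by blast
  have main: "\<forall>p. T p \<noteq> None \<and> (\<forall>k<length p. edge_val T p k = t (snd (p!k))) \<and> l - length p = n
      \<longrightarrow> (\<exists>p s. T p = Some (Some s) \<and> (\<forall>(x,y)\<in>E. s x \<noteq> t y))" for n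
  proof (induction n rule: less_induct)
    case (less n)
    show ?case
    proof (intro allI impI)
      fix p assume H: "T p \<noteq> None \<and> (\<forall>k<length p. edge_val T p k = t (snd (p!k))) \<and> l - length p = n"
      have nb: "\<not> blocked E T p tR"
      proof
        assume "blocked E T p tR"
        then obtain k x where "k < length p" "(x, snd (p!k)) \<in> E" "tR x = edge_val T p k"
          unfolding blocked_def by blast
        with H acc show False by fastforce
      qed
      have "T p \<noteq> Some None" using comp nb tR by blast
      then obtain s where s: "T p = Some (Some s)" using H by (cases "T p") auto
      show "\<exists>p s. T p = Some (Some s) \<and> (\<forall>(x,y)\<in>E. s x \<noteq> t y)"
      proof (cases "\<forall>(x,y)\<in>E. s x \<noteq> t y")
        case True with s show ?thesis by blast
      next
        case False
        then obtain xi yj where e: "(xi,yj) \<in> E" "s xi = t yj" by blast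
        have snb: "\<not> blocked E T p s" using lab s by blast
        have notin: "yj \<notin> snd ` set p"
        proof
          assume "yj \<in> snd ` set p"
          then obtain k where k: "k < length p" "snd (p!k) = yj" by (metis imageE in_set_conv_nth)
          then have "blocked E T p s" unfolding blocked_def using e H by (intro exI[of _ k]) auto
          with snb show False ..
        qed
        have wfp: "set p \<subseteq> E \<and> distinct (map snd p) \<and> length p \<le> l" using wf H by blast
        have lt: "length p < l"
        proof (rule ccontr)
          assume "\<not> length p < l"
          with wfp have len: "length p = l" by simp
          have sub: "set (map snd p) \<subseteq> Y" using wfp EY by auto
          moreover have "card (set (map snd p)) = card Y" using wfp len l distinct_card by (metis length_map)
          ultimately have "set (map snd p) = Y" using fin card_subset_eq by blast
          moreover have "yj \<in> Y" using e EY by auto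
          ultimately show False using notin by simp
        qed
        let ?q = "p @ [(xi,yj)]"
        have Tq: "T ?q \<noteq> None" using child s lt e notin by fastforce
        have good: "\<forall>k<length ?q. edge_val T ?q k = t (snd (?q!k))"
        proof (intro allI impI)
          fix k assume "k < length ?q"
          then consider "k < length p" | "k = length p" by fastforce
          then show "edge_val T ?q k = t (snd (?q!k))"
          proof cases
            case 1
            then have "edge_val T ?q k = edge_val T p k"
              unfolding edge_val_def nth_append_left[OF 1] by simp
            with 1 H show ?thesis by (simp add: nth_append_left)
          next
            case 2 then show ?thesis using s e by (simp add: edge_val_def)
          qed
        qed
        have "l - length p = n" using H by blast
        then have "l - length ?q < n" using lt by simp
        then show ?thesis using less.IH[of "l - length ?q"] Tq good by blast
      qed
    qed
  qed
  show ?thesis using main[of l, rule_format, of "[]"] root by simp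
qed

theorem lemma3:
  fixes X :: "'x set" and Y :: "'y set" and E :: "('x \<times> 'y) set"
    and R :: "('x \<Rightarrow> 'v) set" and ts :: "('x \<Rightarrow> 'v) list"
  assumes "finite X" and "finite Y" and "E \<subseteq> X \<times> Y"
    and "\<forall>y\<in>Y. \<exists>x. (x, y) \<in> E"
    and "R \<subseteq> {t. \<forall>x. x \<notin> X \<longrightarrow> t x = undefined}"
    and "distinct ts" and "set ts = R"
  shows "H_equivalent E (extracted E (card Y) ts) R
         \<and> real (card (extracted E (card Y) ts)) \<le> exp 1 * real (phi X Y E)"
proof -
  let ?T = "build_tree E (card Y) ts"
  have inv: "tinv E (card Y) R ?T"
    using fold_inv[OF init_inv, of E "card Y" ts] assms(7) unfolding build_tree_def by simp
  have wf: "\<forall>p. ?T p \<noteq> None \<longrightarrow> set p \<subseteq> E \<and> distinct (map snd p) \<and> length p \<le> card Y" using inv unfolding tinv_def by blast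
  have lab: "\<forall>p s. ?T p = Some (Some s) \<longrightarrow> s \<in> R \<and> \<not> blocked E ?T p s" using inv unfolding tinv_def by blast
  have sub: "extracted E (card Y) ts \<subseteq> R" using lab unfolding extracted_def by blast
  have equiv: "H_equivalent E (extracted E (card Y) ts) R"
    unfolding H_equivalent_def
  proof
    fix t
    show "H_accepts E (extracted E (card Y) ts) t = H_accepts E R t"
    proof
      assume "H_accepts E (extracted E (card Y) ts) t"
      then show "H_accepts E R t" using sub unfolding H_accepts_def by blast
    next
      assume "H_accepts E R t"
      then obtain tR where "tR \<in> R" "\<forall>(x,y)\<in>E. tR x \<noteq> t y" unfolding H_accepts_def by blast
      from descent[OF inv assms(3,2) refl this] obtain p s where
        "?T p = Some (Some s)" "\<forall>(x,y)\<in>E. s x \<noteq> t y" by blast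
      then show "H_accepts E (extracted E (card Y) ts) t"
        unfolding H_accepts_def extracted_def by blast
    qed
  qed
  have fE: "finite E" using assms(1,2,3) finite_subset by blast
  have nodes: "{p. ?T p \<noteq> None} \<subseteq> paths E Y" using wf assms(3) unfolding paths_def by fastforce
  have fN: "finite {p. ?T p \<noteq> None}" using paths_finite[OF fE assms(2)] nodes finite_subset by blast
  have "extracted E (card Y) ts \<subseteq> (\<lambda>p. the (the (?T p))) ` {p. ?T p \<noteq> None}"
    unfolding extracted_def by force
  then have "card (extracted E (card Y) ts) \<le> card ((\<lambda>p. the (the (?T p))) ` {p. ?T p \<noteq> None})"
    using fN by (intro card_mono finite_imageI)
  also have "\<dots> \<le> card {p. ?T p \<noteq> None}" using fN by (rule card_image_le)
  also have "\<dots> \<le> card (paths E Y)" using nodes paths_finite[OF fE assms(2)] card_mono by blast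
  finally have c1: "real (card (extracted E (card Y) ts)) \<le> real (card (paths E Y))" by simp
  have deg: "\<forall>y\<in>Y. 1 \<le> degree X E y"
  proof
    fix y assume "y \<in> Y"
    then obtain x where "(x,y) \<in> E" using assms(4) by blast
    then have "x \<in> {x\<in>X. (x,y)\<in>E}" using assms(3) by auto
    then show "1 \<le> degree X E y" unfolding degree_def using assms(1)
      by (metis (no_types, lifting) One_nat_def Suc_leI card_gt_0_iff empty_iff finite_subset mem_Collect_eq subsetI)
  qed
  have EX: "E \<subseteq> X \<times> UNIV" using assms(3) by auto
  have "real (card (paths E Y)) \<le> G (card Y) * (\<Prod>y\<in>Y. real (degree X E y))"
    using paths_card[OF assms(1) fE EX deg, of "card Y"] assms(2) by blast
  also have "\<dots> \<le> exp 1 * fact (card Y) * (\<Prod>y\<in>Y. real (degree X E y))"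
    using G_le[of "card Y"] by (intro mult_right_mono prod_nonneg) auto
  also have "\<dots> = exp 1 * real (phi X Y E)" by (simp add: phi_def of_nat_prod)
  finally show ?thesis using equiv c1 by simp
qed

end
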